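(* There exist partition exchange economies with cycle bound $\Delta=3$ and arbitrarily large $|V|$ whose $\big(\tfrac{|V|}{10}-1\big)$-supplemented core is empty.
   Context: A partition exchange economy consists of organizations $N=\{1,\dots,n\}$; pairwise disjoint finite sets $V^1,\dots,V^n$, $V=\bigcup_iV^i$; patient sets $U^i\subseteq V^i$; a directed compatibility graph $\mathcal G=(V,E)$; and a cycle bound $\Delta$. An exchange among $W\subseteq V$ is a set of vertex-disjoint directed cycles of length at most $\Delta$ in $\mathcal G[W]$; $u_i(\mathcal E)$ is the number of vertices of $U^i$ lying on cycles of $\mathcal E$. Given a finite set $V^0$ of new vertices (additional altruistic donors, in no organization), $\mathcal G^{+V^0}$ adds these vertices, an arc from every other vertex into each $a\in V^0$, and for each $a\in V^0$ arcs from $a$ to an arbitrarily chosen set of vertices; exchanges in $\mathcal G^{+V^0}$ are sets of vertex-disjoint cycles of length $\le\Delta$ in it. A nonempty coalition $P\subseteq N$ blocks an exchange $\mathcal E$ if some exchange $\mathcal E'$ among $\bigcup_{i\in P}V^i$ (in $\mathcal G$) has $u_i(\mathcal E')>u_i(\mathcal E)$ for all $i\in P$. An exchange of $\mathcal G^{+V^0}$ blocked by no coalition is in the $V^0$-supplemented core. The $d$-supplemented core is nonempty if for some $V^0$ with $|V^0|\le d$ and some choice of its out-arcs the $V^0$-supplemented core is nonempty; otherwise it is empty. *)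

theory Defs
  imports Main "HOL.Real"
begin

text \<open>An economy is given by the number n of
organizations, the vertex sets Vp i and patient sets Up i (i in {1..n}),
the arc set E of the compatibility graph, and the cycle bound Delta.\<close>

definition all_vertices :: "nat \<Rightarrow> (nat \<Rightarrow> nat set) \<Rightarrow> nat set" where
  "all_vertices n Vp = (\<Union>i\<in>{1..n}. Vp i)"

definition economy ::
  "nat \<Rightarrow> (nat \<Rightarrow> nat set) \<Rightarrow> (nat \<Rightarrow> nat set) \<Rightarrow> (nat \<times> nat) set \<Rightarrow> bool" where
  "economy n Vp Up E \<longleftrightarrow>
     (\<forall>i\<in>{1..n}. finite (Vp i) \<and> Up i \<subseteq> Vp i) \<and>
     (\<forall>i\<in>{1..n}. \<forall>j\<in>{1..n}. i \<noteq> j \<longrightarrow> Vp i \<inter> Vp j = {}) \<and>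
     E \<subseteq> all_vertices n Vp \<times> all_vertices n Vp"

definition is_cycle :: "(nat \<times> nat) set \<Rightarrow> nat set \<Rightarrow> nat \<Rightarrow> nat list \<Rightarrow> bool" where
  "is_cycle E W Delta c \<longleftrightarrow>
     c \<noteq> [] \<and> distinct c \<and> length c \<le> Delta \<and> set c \<subseteq> W \<and>
     (\<forall>k<length c. (c ! k, c ! ((k + 1) mod length c)) \<in> E)"

definition is_exchange :: "(nat \<times> nat) set \<Rightarrow> nat set \<Rightarrow> nat \<Rightarrow> nat list set \<Rightarrow> bool" where
  "is_exchange E W Delta X \<longleftrightarrow>
     (\<forall>c\<in>X. is_cycle E W Delta c) \<and>
     (\<forall>c\<in>X. \<forall>d\<in>X. c \<noteq> d \<longrightarrow> set c \<inter> set d = {})"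

definition covered :: "nat list set \<Rightarrow> nat set" where
  "covered X = (\<Union>c\<in>X. set c)"

definition util :: "(nat \<Rightarrow> nat set) \<Rightarrow> nat \<Rightarrow> nat list set \<Rightarrow> nat" where
  "util Up i X = card (Up i \<inter> covered X)"

text \<open>Coalition P blocks exchange X (exchanges of the coalition use the original graph).\<close>
definition blocks ::
  "nat \<Rightarrow> (nat \<Rightarrow> nat set) \<Rightarrow> (nat \<Rightarrow> nat set) \<Rightarrow> (nat \<times> nat) set \<Rightarrow> nat
    \<Rightarrow> nat set \<Rightarrow> nat list set \<Rightarrow> bool" where
  "blocks n Vp Up E Delta P X \<longleftrightarrow>
     P \<noteq> {} \<and> P \<subseteq> {1..n} \<and>
     (\<exists>X'. is_exchange E (\<Union>i\<in>P. Vp i) Delta X' \<and>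
           (\<forall>i\<in>P. util Up i X' > util Up i X))"

text \<open>The supplemented graph G^{+V0}: F is the chosen set of out-arcs of the new vertices.\<close>
definition supp_arcs ::
  "nat set \<Rightarrow> (nat \<times> nat) set \<Rightarrow> nat set \<Rightarrow> (nat \<times> nat) set \<Rightarrow> (nat \<times> nat) set" where
  "supp_arcs V E V0 F = E \<union> {(v, a). a \<in> V0 \<and> v \<in> V \<union> V0 \<and> v \<noteq> a} \<union> F"

definition supp_core_nonempty_set ::
  "nat \<Rightarrow> (nat \<Rightarrow> nat set) \<Rightarrow> (nat \<Rightarrow> nat set) \<Rightarrow> (nat \<times> nat) set \<Rightarrow> nat
    \<Rightarrow> nat set \<Rightarrow> (nat \<times> nat) set \<Rightarrow> bool" where
  "supp_core_nonempty_set n Vp Up E Delta V0 F \<longleftrightarrow>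
     (\<exists>X. is_exchange (supp_arcs (all_vertices n Vp) E V0 F) (all_vertices n Vp \<union> V0) Delta X \<and>
          \<not> (\<exists>P. blocks n Vp Up E Delta P X))"

definition d_supp_core_nonempty ::
  "nat \<Rightarrow> (nat \<Rightarrow> nat set) \<Rightarrow> (nat \<Rightarrow> nat set) \<Rightarrow> (nat \<times> nat) set \<Rightarrow> nat \<Rightarrow> real \<Rightarrow> bool" where
  "d_supp_core_nonempty n Vp Up E Delta d \<longleftrightarrow>
     (\<exists>V0 F. finite V0 \<and> real (card V0) \<le> d \<and> V0 \<inter> all_vertices n Vp = {} \<and>
            F \<subseteq> V0 \<times> (all_vertices n Vp \<union> V0) \<and>
            supp_core_nonempty_set n Vp Up E Delta V0 F)"

end

theory Submission imports Defs begin

definition G0 :: "(nat \<times> nat) set" where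
  "G0 = {(0,1),(1,3),(3,0),(2,5),(5,3),(3,2),(4,5),(5,1),(1,4)}"
definition EE :: "nat \<Rightarrow> (nat \<times> nat) set" where
  "EE k = {(u,v). u < 6*k \<and> v < 6*k \<and> u div 6 = v div 6 \<and> (u mod 6, v mod 6) \<in> G0}"
definition VV :: "nat \<Rightarrow> nat set" where "VV i = {v. v div 2 + 1 = i}"
definition Oa :: "nat \<Rightarrow> nat set" where "Oa j = {6*j, 6*j+1, 6*j+3}"
definition Ob :: "nat \<Rightarrow> nat set" where "Ob j = {6*j+2, 6*j+3, 6*j+5}"
definition Oc :: "nat \<Rightarrow> nat set" where "Oc j = {6*j+1, 6*j+4, 6*j+5}"

lemma G0_mem: "(p,q) \<in> G0 \<longleftrightarrow> (p=0 \<and> q=1) \<or> (p=1 \<and> q=3) \<or> (p=3 \<and> q=0) \<or> (p=2 \<and> q=5) \<or>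
  (p=5 \<and> q=3) \<or> (p=3 \<and> q=2) \<or> (p=4 \<and> q=5) \<or> (p=5 \<and> q=1) \<or> (p=1 \<and> q=4)"
  unfolding G0_def by auto
lemma G0_tri: "(p,q)\<in>G0 \<Longrightarrow> (q,r)\<in>G0 \<Longrightarrow> (r,p)\<in>G0 \<Longrightarrow>
   (p,q,r) \<in> {(0,1,3),(1,3,0),(3,0,1),(2,5,3),(5,3,2),(3,2,5),(4,5,1),(5,1,4),(1,4,5)}"
  unfolding G0_mem by (elim disjE conjE; simp)
lemma G0_no2: "(p,q)\<in>G0 \<Longrightarrow> (q,p)\<notin>G0"
  unfolding G0_mem by (elim disjE conjE; simp)
lemma G0_no1: "(p,p)\<notin>G0"
  unfolding G0_mem by linarith

lemma cyc3:
  assumes "is_cycle E W 3 c"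
  shows "(\<exists>x. c=[x] \<and> (x,x)\<in>E) \<or> (\<exists>x y. c=[x,y] \<and> x\<noteq>y \<and> (x,y)\<in>E \<and> (y,x)\<in>E) \<or>
    (\<exists>x y z. c=[x,y,z] \<and> distinct [x,y,z] \<and> (x,y)\<in>E \<and> (y,z)\<in>E \<and> (z,x)\<in>E)"
proof -
  from assms have ne: "c \<noteq> []" and d: "distinct c" and l: "length c \<le> 3"
    and ar: "\<forall>k<length c. (c!k, c!((k+1) mod length c)) \<in> E"
    by (auto simp: is_cycle_def)
  show ?thesis
  proof (cases c)
    case Nil with ne show ?thesis by simp
  next
    case (Cons x r1)
    show ?thesis
    proof (cases r1)
      case Nil
      with Cons ar show ?thesis by auto
    next
      case (Cons y r2)
      show ?thesis
      proof (cases r2)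
        case Nil
        then show ?thesis using \<open>c = x # r1\<close> Cons d ar[rule_format, of 0] ar[rule_format, of 1] by simp
      next
        case (Cons z r3)
        have "r3 = []" using l \<open>c = x # r1\<close> \<open>r1 = y # r2\<close> Cons by simp
        then show ?thesis using \<open>c = x # r1\<close> \<open>r1 = y # r2\<close> Cons d
            ar[rule_format, of 0] ar[rule_format, of 1] ar[rule_format, of 2] by simp
      qed
    qed
  qed
qed

lemma cyc3_iff: "is_cycle E W Delta [x,y,z] \<longleftrightarrow> distinct [x,y,z] \<and> 3 \<le> Delta \<and> {x,y,z} \<subseteq> W
   \<and> (x,y)\<in>E \<and> (y,z)\<in>E \<and> (z,x)\<in>E"
proof -
  have l: "length [x,y,z] = 3" by simp
  have all3: "(\<forall>k<(3::nat). P k) \<longleftrightarrow> P 0 \<and> P (Suc 0) \<and> P (Suc (Suc 0))" for P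
    by (auto simp: numeral_3_eq_3 less_Suc_eq)
  show ?thesis unfolding is_cycle_def l all3 by simp
qed

lemma EE_tri:
  assumes "(x,y)\<in>EE k" "(y,z)\<in>EE k" "(z,x)\<in>EE k"
  shows "\<exists>j<k. {x,y,z} = Oa j \<or> {x,y,z} = Ob j \<or> {x,y,z} = Oc j"
proof -
  define j where "j = x div 6"
  have jk: "j < k" using assms unfolding EE_def j_def by auto
  have dy: "y div 6 = j" "z div 6 = j" using assms unfolding EE_def j_def by auto
  have g: "(x mod 6, y mod 6)\<in>G0" "(y mod 6, z mod 6)\<in>G0" "(z mod 6, x mod 6)\<in>G0"
    using assms unfolding EE_def by auto
  have ex: "x = 6*j + x mod 6" "y = 6*j + y mod 6" "z = 6*j + z mod 6"
    using dy j_def by (metis div_mult_mod_eq mult.commute add.commute)+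
  from G0_tri[OF g] have "{x,y,z} = Oa j \<or> {x,y,z} = Ob j \<or> {x,y,z} = Oc j"
  proof (elim insertE)
  qed (use ex in \<open>auto simp: Oa_def Ob_def Oc_def\<close>)
  then show ?thesis using jk by blast
qed

lemma EEI: assumes "j<k" "a<6" "b<6" "(a,b)\<in>G0" shows "(6*j+a, 6*j+b) \<in> EE k"
proof -
  have "6*j+a < 6*k" "6*j+b < 6*k" using assms(1-3) by linarith+
  moreover have "(6*j+a) div 6 = j" "(6*j+b) div 6 = j" "(6*j+a) mod 6 = a" "(6*j+b) mod 6 = b"
    using assms(2,3) by simp_all
  ultimately show ?thesis using assms(4) unfolding EE_def by simp
qed

lemma VV1: "VV (3*j+1) = {6*j, 6*j+1}" unfolding VV_def by auto
lemma VV2: "VV (3*j+2) = {6*j+2, 6*j+3}" unfolding VV_def by auto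
lemma VV3: "VV (3*j+3) = {6*j+4, 6*j+5}" unfolding VV_def by auto

lemma AV: "all_vertices (3*k) VV = {..<6*k}"
  unfolding all_vertices_def VV_def by auto

lemma Opair: "S \<in> {Oa j, Ob j, Oc j} \<Longrightarrow> S' \<in> {Oa j, Ob j, Oc j} \<Longrightarrow> S \<inter> S' \<noteq> {}"
  unfolding Oa_def Ob_def Oc_def by auto

lemma Odiv: "S \<in> {Oa j, Ob j, Oc j} \<Longrightarrow> v \<in> S \<Longrightarrow> v div 6 = j"
  unfolding Oa_def Ob_def Oc_def by auto

lemma blocksI: "P \<noteq> {} \<Longrightarrow> P \<subseteq> {1..n} \<Longrightarrow> is_cycle E (\<Union>i\<in>P. Vp i) Delta c \<Longrightarrow>
   (\<forall>i\<in>P. util Up i {c} > util Up i X) \<Longrightarrow> blocks n Vp Up E Delta P X"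
  unfolding blocks_def is_exchange_def by (rule conjI, simp, rule conjI, simp, rule exI[of _ "{c}"]) auto

lemma main:
  "\<not> d_supp_core_nonempty (3*k) VV VV (EE k) 3 (real (6*k) / 10 - 1)"
proof
  assume "d_supp_core_nonempty (3*k) VV VV (EE k) 3 (real (6*k) / 10 - 1)"
  then obtain V0 F X where fin: "finite V0" and cardV0: "real (card V0) \<le> real (6*k)/10 - 1"
    and disj: "V0 \<inter> {..<6*k} = {}" and Fsub: "F \<subseteq> V0 \<times> ({..<6*k} \<union> V0)"
    and exch: "is_exchange (supp_arcs {..<6*k} (EE k) V0 F) ({..<6*k} \<union> V0) 3 X"
    and nb: "\<not> (\<exists>P. blocks (3*k) VV VV (EE k) 3 P X)"
    unfolding d_supp_core_nonempty_def supp_core_nonempty_set_def AV by blast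
  define A where "A = supp_arcs {..<6*k} (EE k) V0 F"
  have arcE: "\<And>p q. (p,q)\<in>A \<Longrightarrow> p\<notin>V0 \<Longrightarrow> q\<notin>V0 \<Longrightarrow> (p,q)\<in>EE k"
    using Fsub unfolding A_def supp_arcs_def by auto
  have cyc: "\<And>c. c\<in>X \<Longrightarrow> is_cycle A ({..<6*k} \<union> V0) 3 c"
    using exch unfolding A_def is_exchange_def by auto
  have dsj: "\<And>c d. c\<in>X \<Longrightarrow> d\<in>X \<Longrightarrow> c\<noteq>d \<Longrightarrow> set c \<inter> set d = {}"
    using exch unfolding is_exchange_def by auto
  define AX where "AX = {c\<in>X. set c \<inter> V0 \<noteq> {}}"
  define pick where "pick c = (SOME a. a \<in> set c \<inter> V0)" for c :: "nat list"
  have pick_in: "pick c \<in> set c \<inter> V0" if "c \<in> AX" for c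
  proof -
    from that obtain a where "a \<in> set c \<inter> V0" unfolding AX_def by auto
    then show ?thesis unfolding pick_def by (rule someI)
  qed
  have inj: "inj_on pick AX"
  proof (rule inj_onI)
    fix c d assume "c \<in> AX" "d \<in> AX" "pick c = pick d"
    have "pick c \<in> set c" using pick_in[OF \<open>c \<in> AX\<close>] by simp
    moreover have "pick d \<in> set d" using pick_in[OF \<open>d \<in> AX\<close>] by simp
    ultimately have ne: "set c \<inter> set d \<noteq> {}" using \<open>pick c = pick d\<close> by auto
    have "c \<in> X" "d \<in> X" using \<open>c \<in> AX\<close> \<open>d \<in> AX\<close> unfolding AX_def by auto
    then show "c = d" using dsj ne by blast
  qed
  have pimg: "pick ` AX \<subseteq> V0" using pick_in by blast
  have cardAX: "card AX \<le> card V0" by (rule card_inj_on_le[OF inj pimg fin])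
  have finAX: "finite AX" by (rule inj_on_finite[OF inj pimg fin])
  have samediv: "u div 6 = w div 6" if H: "c \<in> AX" "u \<in> set c - V0" "w \<in> set c - V0" for c u w
  proof -
    have cc: "is_cycle A ({..<6*k} \<union> V0) 3 c" using H(1) cyc unfolding AX_def by auto
    obtain a where a: "a \<in> set c" "a \<in> V0" using H(1) unfolding AX_def by auto
    have ee: "(p,q) \<in> A \<Longrightarrow> p \<notin> V0 \<Longrightarrow> q \<notin> V0 \<Longrightarrow> p div 6 = q div 6" for p q
      using arcE[of p q] unfolding EE_def by auto
    from cyc3[OF cc] show ?thesis
    proof (elim disjE exE conjE)
      fix x assume "c = [x]" then show ?thesis using H by auto
    next
      fix x y assume "c = [x,y]" then show ?thesis using H a by auto
    next
      fix x y z assume h: "c = [x,y,z]" "(x,y)\<in>A" "(y,z)\<in>A" "(z,x)\<in>A"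
      have d1: "x \<notin> V0 \<Longrightarrow> y \<notin> V0 \<Longrightarrow> x div 6 = y div 6" by (rule ee[OF h(2)])
      have d2: "y \<notin> V0 \<Longrightarrow> z \<notin> V0 \<Longrightarrow> y div 6 = z div 6" by (rule ee[OF h(3)])
      have d3: "z \<notin> V0 \<Longrightarrow> x \<notin> V0 \<Longrightarrow> z div 6 = x div 6" by (rule ee[OF h(4)])
      have uw: "u = x \<or> u = y \<or> u = z" "w = x \<or> w = y \<or> w = z" "u \<notin> V0" "w \<notin> V0"
        using H(2,3) h(1) by auto
      from uw(1,2) show ?thesis
      proof (elim disjE)
      qed (use uw(3,4) d1 d2 d3 in simp_all)
    qed
  qed
  have one: "card ((\<lambda>v. v div 6) ` (set c - V0)) \<le> 1" if "c \<in> AX" for c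
  proof -
    have fin: "finite ((\<lambda>v. v div 6) ` (set c - V0))" by simp
    have "\<forall>a1\<in>(\<lambda>v. v div 6) ` (set c - V0). \<forall>a2\<in>(\<lambda>v. v div 6) ` (set c - V0). a1 = a2"
      using samediv[OF that] by blast
    then have "card ((\<lambda>v. v div 6) ` (set c - V0)) \<le> Suc 0"
      using card_le_Suc0_iff_eq[OF fin] by blast
    then show ?thesis by simp
  qed
  define T where "T = (\<Union>c\<in>AX. (\<lambda>v. v div 6) ` (set c - V0))"
  have finT: "finite T" unfolding T_def using finAX by auto
  have "card T \<le> (\<Sum>c\<in>AX. card ((\<lambda>v. v div 6) ` (set c - V0)))"
    unfolding T_def using finAX by (rule card_UN_le)
  also have "\<dots> \<le> (\<Sum>c\<in>AX. 1)" using one by (rule sum_mono)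
  also have "\<dots> = card AX" by simp
  finally have cT: "card T \<le> card V0" using cardAX by linarith
  have r: "real (6*k)/10 - 1 < real k" by simp
  have "real (card V0) < real k" using cardV0 r by (rule le_less_trans)
  then have "card V0 < k" by (rule of_nat_less_imp_less)
  then have ck: "card T < card {..<k}" using cT by simp
  have "\<not> {..<k} \<subseteq> T"
  proof
    assume "{..<k} \<subseteq> T"
    then have "card {..<k} \<le> card T" by (rule card_mono[OF finT])
    then show False using ck by simp
  qed
  then obtain j where jk: "j < k" and jT: "j \<notin> T" by auto
  have clean: "set c \<inter> V0 = {}" if "c \<in> X" "v \<in> set c" "v div 6 = j" for c v
  proof (rule ccontr)
    assume "set c \<inter> V0 \<noteq> {}"
    then have "c \<in> AX" unfolding AX_def using that by auto
    moreover have "v \<notin> V0" using disj that jk by auto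
    ultimately have "j \<in> T" unfolding T_def using that by auto
    then show False using jT by simp
  qed
  have Ocyc: "set c \<in> {Oa j, Ob j, Oc j}" if "c \<in> X" "v \<in> set c" "v div 6 = j" for c v
  proof -
    have cl: "set c \<inter> V0 = {}" by (rule clean[OF that])
    have cc: "is_cycle A ({..<6*k} \<union> V0) 3 c" using that(1) cyc by auto
    from cyc3[OF cc] show ?thesis
    proof (elim disjE exE conjE)
      fix x assume h: "c = [x]" "(x,x)\<in>A"
      then have "(x,x) \<in> EE k" using arcE cl by auto
      then show ?thesis using G0_no1 unfolding EE_def by auto
    next
      fix x y assume h: "c = [x,y]" "(x,y)\<in>A" "(y,x)\<in>A"
      then have "(x,y) \<in> EE k" "(y,x) \<in> EE k" using arcE cl by auto
      then show ?thesis using G0_no2 unfolding EE_def by auto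
    next
      fix x y z assume h: "c = [x,y,z]" "(x,y)\<in>A" "(y,z)\<in>A" "(z,x)\<in>A"
      then have "(x,y) \<in> EE k" "(y,z) \<in> EE k" "(z,x) \<in> EE k" using arcE cl by auto
      from EE_tri[OF this] obtain j' where "{x,y,z} = Oa j' \<or> {x,y,z} = Ob j' \<or> {x,y,z} = Oc j'"
        by blast
      then have s: "set c \<in> {Oa j', Ob j', Oc j'}" using h by auto
      then have "j' = j" using Odiv[OF s that(2)] that(3) by simp
      then show ?thesis using s by simp
    qed
  qed
  define blk where "blk = {v. v div 6 = j}"
  have cov: "covered X \<inter> blk \<in> {{}, Oa j, Ob j, Oc j}"
  proof (cases "covered X \<inter> blk = {}")
    case True then show ?thesis by simp
  next
    case False
    then obtain v c where vc: "c \<in> X" "v \<in> set c" "v div 6 = j"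
      unfolding covered_def blk_def by auto
    have sc: "set c \<in> {Oa j, Ob j, Oc j}" by (rule Ocyc[OF vc])
    have "covered X \<inter> blk = set c"
    proof
      show "covered X \<inter> blk \<subseteq> set c"
      proof
        fix w assume "w \<in> covered X \<inter> blk"
        then obtain d where d: "d \<in> X" "w \<in> set d" "w div 6 = j"
          unfolding covered_def blk_def by auto
        have sd: "set d \<in> {Oa j, Ob j, Oc j}" by (rule Ocyc[OF d])
        have "d = c" using dsj[OF d(1) vc(1)] Opair[OF sd sc] by blast
        then show "w \<in> set c" using d by simp
      qed
    next
      show "set c \<subseteq> covered X \<inter> blk"
        using vc(1) Odiv[OF sc] unfolding covered_def blk_def by auto
    qed
    then show ?thesis using sc by simp
  qed
  have sub1: "VV (3*j+1) \<subseteq> blk" "VV (3*j+2) \<subseteq> blk" "VV (3*j+3) \<subseteq> blk"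
    unfolding VV1 VV2 VV3 blk_def by auto
  have ut: "util VV i X = card (VV i \<inter> (covered X \<inter> blk))" if "VV i \<subseteq> blk" for i
    unfolding util_def using that by (metis Int_assoc Int_commute inf.absorb_iff2)
  have u1: "util VV (3*j+1) X = card ({6*j, 6*j+1} \<inter> (covered X \<inter> blk))"
    using ut[OF sub1(1)] VV1 by simp
  have u2: "util VV (3*j+2) X = card ({6*j+2, 6*j+3} \<inter> (covered X \<inter> blk))"
    using ut[OF sub1(2)] VV2 by simp
  have u3: "util VV (3*j+3) X = card ({6*j+4, 6*j+5} \<inter> (covered X \<inter> blk))"
    using ut[OF sub1(3)] VV3 by simp
  have uc: "util VV i {c} = card (VV i \<inter> set c)" for i c
    unfolding util_def covered_def by simp
  have rng: "3*j+1 \<in> {1..3*k}" "3*j+2 \<in> {1..3*k}" "3*j+3 \<in> {1..3*k}" using jk by auto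
  have cA: "is_cycle (EE k) (VV (3*j+1) \<union> VV (3*j+2)) 3 [6*j, 6*j+1, 6*j+3]"
     using EEI[OF jk, of 0 1] EEI[OF jk, of 1 3] EEI[OF jk, of 3 0] unfolding cyc3_iff VV1 VV2 by (simp add: G0_mem)
  have cB: "is_cycle (EE k) (VV (3*j+2) \<union> VV (3*j+3)) 3 [6*j+2, 6*j+5, 6*j+3]"
     using EEI[OF jk, of 2 5] EEI[OF jk, of 5 3] EEI[OF jk, of 3 2] unfolding cyc3_iff VV2 VV3 by (simp add: G0_mem)
  have cC: "is_cycle (EE k) (VV (3*j+3) \<union> VV (3*j+1)) 3 [6*j+4, 6*j+5, 6*j+1]"
     using EEI[OF jk, of 4 5] EEI[OF jk, of 5 1] EEI[OF jk, of 1 4] unfolding cyc3_iff VV3 VV1 by (simp add: G0_mem)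
  have bA: "blocks (3*k) VV VV (EE k) 3 {3*j+1, 3*j+2} X"
    if "util VV (3*j+1) X < 2" "util VV (3*j+2) X < 1"
  proof (rule blocksI)
    show "{3*j+1, 3*j+2} \<noteq> {}" by simp
    show "{3*j+1, 3*j+2} \<subseteq> {1..3*k}" using rng by auto
    have W: "(\<Union>i\<in>{3*j+1, 3*j+2}. VV i) = VV (3*j+1) \<union> VV (3*j+2)" by blast
    show "is_cycle (EE k) (\<Union>i\<in>{3*j+1, 3*j+2}. VV i) 3 [6*j, 6*j+1, 6*j+3]" unfolding W by (rule cA)
    have i1: "VV (3*j+1) \<inter> set [6*j, 6*j+1, 6*j+3] = {6*j, 6*j+1}" unfolding VV1 by auto
    have i2: "VV (3*j+2) \<inter> set [6*j, 6*j+1, 6*j+3] = {6*j+3}" unfolding VV2 by auto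
    have "util VV (3*j+1) {[6*j, 6*j+1, 6*j+3]} = 2" unfolding uc i1 by simp
    moreover have "util VV (3*j+2) {[6*j, 6*j+1, 6*j+3]} = 1" unfolding uc i2 by simp
    ultimately show "\<forall>i\<in>{3*j+1, 3*j+2}. util VV i X < util VV i {[6*j, 6*j+1, 6*j+3]}" using that by simp
  qed
  have bB: "blocks (3*k) VV VV (EE k) 3 {3*j+2, 3*j+3} X"
    if "util VV (3*j+2) X < 2" "util VV (3*j+3) X < 1"
  proof (rule blocksI)
    show "{3*j+2, 3*j+3} \<noteq> {}" by simp
    show "{3*j+2, 3*j+3} \<subseteq> {1..3*k}" using rng by auto
    have W: "(\<Union>i\<in>{3*j+2, 3*j+3}. VV i) = VV (3*j+2) \<union> VV (3*j+3)" by blast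
    show "is_cycle (EE k) (\<Union>i\<in>{3*j+2, 3*j+3}. VV i) 3 [6*j+2, 6*j+5, 6*j+3]" unfolding W by (rule cB)
    have i1: "VV (3*j+2) \<inter> set [6*j+2, 6*j+5, 6*j+3] = {6*j+2, 6*j+3}" unfolding VV2 by auto
    have i2: "VV (3*j+3) \<inter> set [6*j+2, 6*j+5, 6*j+3] = {6*j+5}" unfolding VV3 by auto
    have "util VV (3*j+2) {[6*j+2, 6*j+5, 6*j+3]} = 2" unfolding uc i1 by simp
    moreover have "util VV (3*j+3) {[6*j+2, 6*j+5, 6*j+3]} = 1" unfolding uc i2 by simp
    ultimately show "\<forall>i\<in>{3*j+2, 3*j+3}. util VV i X < util VV i {[6*j+2, 6*j+5, 6*j+3]}" using that by simp
  qed
  have bC: "blocks (3*k) VV VV (EE k) 3 {3*j+3, 3*j+1} X"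
    if "util VV (3*j+3) X < 2" "util VV (3*j+1) X < 1"
  proof (rule blocksI)
    show "{3*j+3, 3*j+1} \<noteq> {}" by simp
    show "{3*j+3, 3*j+1} \<subseteq> {1..3*k}" using rng by auto
    have W: "(\<Union>i\<in>{3*j+3, 3*j+1}. VV i) = VV (3*j+3) \<union> VV (3*j+1)" by blast
    show "is_cycle (EE k) (\<Union>i\<in>{3*j+3, 3*j+1}. VV i) 3 [6*j+4, 6*j+5, 6*j+1]" unfolding W by (rule cC)
    have i1: "VV (3*j+3) \<inter> set [6*j+4, 6*j+5, 6*j+1] = {6*j+4, 6*j+5}" unfolding VV3 by auto
    have i2: "VV (3*j+1) \<inter> set [6*j+4, 6*j+5, 6*j+1] = {6*j+1}" unfolding VV1 by auto
    have "util VV (3*j+3) {[6*j+4, 6*j+5, 6*j+1]} = 2" unfolding uc i1 by simp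
    moreover have "util VV (3*j+1) {[6*j+4, 6*j+5, 6*j+1]} = 1" unfolding uc i2 by simp
    ultimately show "\<forall>i\<in>{3*j+3, 3*j+1}. util VV i X < util VV i {[6*j+4, 6*j+5, 6*j+1]}" using that by simp
  qed
  from cov consider "covered X \<inter> blk = {}" | "covered X \<inter> blk = Oa j"
    | "covered X \<inter> blk = Ob j" | "covered X \<inter> blk = Oc j" by blast
  then show False
  proof cases
    case 1
    then have "util VV (3*j+1) X < 2" "util VV (3*j+2) X < 1" using u1 u2 by simp_all
    then show False using bA nb by blast
  next
    case 2
    have "{6*j+2, 6*j+3} \<inter> Oa j = {6*j+3}" "{6*j+4, 6*j+5} \<inter> Oa j = {}"
      unfolding Oa_def by auto
    then have "util VV (3*j+2) X < 2" "util VV (3*j+3) X < 1" using u2 u3 2 by simp_all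
    then show False using bB nb by blast
  next
    case 3
    have "{6*j+4, 6*j+5} \<inter> Ob j = {6*j+5}" "{6*j, 6*j+1} \<inter> Ob j = {}"
      unfolding Ob_def by auto
    then have "util VV (3*j+3) X < 2" "util VV (3*j+1) X < 1" using u3 u1 3 by simp_all
    then show False using bC nb by blast
  next
    case 4
    have "{6*j, 6*j+1} \<inter> Oc j = {6*j+1}" "{6*j+2, 6*j+3} \<inter> Oc j = {}"
      unfolding Oc_def by auto
    then have "util VV (3*j+1) X < 2" "util VV (3*j+2) X < 1" using u1 u2 4 by simp_all
    then show False using bA nb by blast
  qed
qed

theorem mainTheorem3:
  shows "\<forall>m::nat. \<exists>n Vp Up E.
     economy n Vp Up E \<and> card (all_vertices n Vp) \<ge> m \<and>
     \<not> d_supp_core_nonempty n Vp Up E 3 (real (card (all_vertices n Vp)) / 10 - 1)"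
proof
  fix m :: nat
  have ec: "economy (3*m) VV VV (EE m)"
    unfolding economy_def AV
  proof (intro conjI ballI impI)
    fix i show "finite (VV i)" by (rule finite_subset[of _ "{..<2*i}"]) (auto simp: VV_def)
  next
    fix i show "VV i \<subseteq> VV i" by simp
  next
    fix i j :: nat assume "i \<noteq> j" then show "VV i \<inter> VV j = {}" by (auto simp: VV_def)
  next
    show "EE m \<subseteq> {..<6*m} \<times> {..<6*m}" by (auto simp: EE_def)
  qed
  show "\<exists>n Vp Up E.
     economy n Vp Up E \<and> card (all_vertices n Vp) \<ge> m \<and>
     \<not> d_supp_core_nonempty n Vp Up E 3 (real (card (all_vertices n Vp)) / 10 - 1)"
    using ec main[of m] by (intro exI[of _ "3*m"] exI[of _ VV] exI[of _ VV] exI[of _ "EE m"]) (simp add: AV)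
qed

end
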